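(* For any positive integer $k$, in $\mathfrak{h}^1_t[[u]]$, $$S_t\left(\frac{1}{1-z_ku}\right)=\frac{1}{1-z_k(1-t)u}\ast S\left(\frac{1}{1-z_ktu}\right),$$ or equivalently, for all $n\ge1$, $$S_t(z_k^n)=\sum_{\substack{i+j=n\\ i,j\ge0}}(1-t)^it^j\,z_k^i\ast S(z_k^j).$$ In particular, if $k\ge2$, then for all $n\ge1$, $$\zeta^t(\{k\}^n)=\sum_{\substack{i+j=n\\ i,j\ge0}}(1-t)^it^j\zeta(\{k\}^i)\zeta^\star(\{k\}^j).$$
   Context: $t,u$ are commuting variables. $\mathfrak{h}_t=\mathbb{Q}[t]\langle x,y\rangle$ ($1$ = empty word), $\mathfrak{h}^1_t=\mathbb{Q}[t]+\mathfrak{h}_ty$, $z_k=x^{k-1}y$, $z_k^n$ is a concatenation power and $\frac1{1-Xu}=\sum_nX^nu^n$. For a parameter $s$, $\sigma_s$ is the algebra automorphism with $\sigma_s(x)=x,\sigma_s(y)=sx+y$ and $S_s$ is the linear map with $S_s(1)=1$, $S_s(wa)=\sigma_s(w)a$ for words $w$ and letters $a$; $S:=S_1$. The harmonic product $\ast$ on $\mathfrak{h}^1_t$ is the $\mathbb{Q}[t]$-bilinear product with $1\ast w=w\ast1=w$ and $z_kw_1\ast z_lw_2=z_k(w_1\ast z_lw_2)+z_l(z_kw_1\ast w_2)+z_{k+l}(w_1\ast w_2)$ for words $w_1,w_2\in\mathfrak{h}^1_t$; all maps and products extend coefficientwise to power series in $u$. $\{k\}^n$ is $n$ repetitions of $k$;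 values at the empty index are $1$. For $k_1\ge2$, $\zeta(k_1,\ldots,k_n)=\sum_{m_1>\cdots>m_n>0}\prod m_j^{-k_j}$, $\zeta^\star(k_1,\ldots,k_n)=\sum_{m_1\ge\cdots\ge m_n>0}\prod m_j^{-k_j}$, $\zeta^t(k_1,\ldots,k_n)=\sum_{\mathbf p}t^{n-\mathrm{dep}(\mathbf p)}\zeta(\mathbf p)$ over sequences $\mathbf p$ obtained from $(k_1,\ldots,k_n)$ by replacing each separating comma by a comma or a plus sign ($\mathrm{dep}$ = length). *)

theory Defs
  imports "HOL-Analysis.Analysis" "HOL-Computational_Algebra.Polynomial"
begin

datatype letter = LX | LY

text \<open>Elements of h_t are finitely supported functions from words to rat poly
  (the coefficient ring Q[t]); t is the polynomial variable.\<close>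

type_synonym elem = "letter list \<Rightarrow> rat poly"

definition tvar :: "rat poly" where "tvar = [:0, 1:]"

definition supp :: "elem \<Rightarrow> letter list set" where
  "supp f = {w. f w \<noteq> 0}"

definition wd :: "letter list \<Rightarrow> elem" where
  "wd w = (\<lambda>v. if v = w then 1 else 0)"

definition cmul :: "elem \<Rightarrow> elem \<Rightarrow> elem" where
  "cmul f g = (\<lambda>v. \<Sum>a\<in>supp f. \<Sum>b\<in>supp g. if a @ b = v then f a * g b else 0)"

definition lin :: "(letter list \<Rightarrow> elem) \<Rightarrow> elem \<Rightarrow> elem" where
  "lin L f = (\<lambda>v. \<Sum>w\<in>supp f. f w * L w v)"

fun sigma :: "rat poly \<Rightarrow> letter list \<Rightarrow> elem" where
  "sigma s [] = wd []"
| "sigma s (LX # w) = cmul (wd [LX]) (sigma s w)"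
| "sigma s (LY # w) = cmul (\<lambda>v. s * wd [LX] v + wd [LY] v) (sigma s w)"

definition Sw :: "rat poly \<Rightarrow> letter list \<Rightarrow> elem" where
  "Sw s w = (if w = [] then wd [] else cmul (sigma s (butlast w)) (wd [last w]))"

definition Smap :: "rat poly \<Rightarrow> elem \<Rightarrow> elem" where
  "Smap s f = lin (Sw s) f"

definition zk :: "nat \<Rightarrow> letter list" where
  "zk k = replicate (k - 1) LX @ [LY]"

definition zw :: "nat list \<Rightarrow> letter list" where
  "zw ks = concat (map zk ks)"

definition zpow :: "nat \<Rightarrow> nat \<Rightarrow> letter list" where
  "zpow k n = concat (replicate n (zk k))"

fun toidx_aux :: "nat \<Rightarrow> letter list \<Rightarrow> nat list" where
  "toidx_aux c [] = []"
| "toidx_aux c (LX # w) = toidx_aux (Suc c) w"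
| "toidx_aux c (LY # w) = Suc c # toidx_aux 0 w"

definition toidx :: "letter list \<Rightarrow> nat list" where
  "toidx w = toidx_aux 0 w"

text \<open>Harmonic (stuffle) product on index lists, as a list of terms with multiplicity.\<close>
fun stuffle :: "nat list \<Rightarrow> nat list \<Rightarrow> nat list list" where
  "stuffle [] l = [l]"
| "stuffle k [] = [k]"
| "stuffle (a # k) (b # l) =
     map ((#) a) (stuffle k (b # l)) @ map ((#) b) (stuffle (a # k) l)
     @ map ((#) (a + b)) (stuffle k l)"

definition harm_w :: "letter list \<Rightarrow> letter list \<Rightarrow> elem" where
  "harm_w a b = (\<lambda>v. \<Sum>m\<leftarrow>stuffle (toidx a) (toidx b). wd (zw m) v)"

text \<open>Harmonic product (meaningful on h^1_t, i.e. for elements supported on words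
  that are empty or end in y).\<close>
definition harm :: "elem \<Rightarrow> elem \<Rightarrow> elem" where
  "harm f g = (\<lambda>v. \<Sum>a\<in>supp f. \<Sum>b\<in>supp g. f a * g b * harm_w a b v)"

definition mzv :: "nat list \<Rightarrow> real" where
  "mzv ks = infsum (\<lambda>ms. \<Prod>j<length ks. 1 / real (ms ! j) ^ (ks ! j))
     {ms. length ms = length ks \<and> sorted_wrt (>) ms \<and> (\<forall>m\<in>set ms. 0 < m)}"

definition mzsv :: "nat list \<Rightarrow> real" where
  "mzsv ks = infsum (\<lambda>ms. \<Prod>j<length ks. 1 / real (ms ! j) ^ (ks ! j))
     {ms. length ms = length ks \<and> sorted_wrt (\<ge>) ms \<and> (\<forall>m\<in>set ms. 0 < m)}"

text \<open>Sequences obtained by replacing each comma by a comma or a plus sign.\<close>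
fun merges :: "nat list \<Rightarrow> nat list list" where
  "merges [] = [[]]"
| "merges [a] = [[a]]"
| "merges (a # b # r) = map ((#) a) (merges (b # r)) @ merges ((a + b) # r)"

definition mzv_t :: "nat list \<Rightarrow> real poly" where
  "mzv_t ks = (\<Sum>p\<leftarrow>merges ks. monom (mzv p) (length ks - length p))"

end

theory Submission
  imports Defs
begin


lemma sum_list_map_concat: "sum_list (map f (concat L)) = sum_list (map (\<lambda>l. sum_list (map f l)) L)"
  by (induction L) auto

lemma sum_list_map_upt0: "sum_list (map f [0..<n]) = (\<Sum>i<n. f i)"
  by (induction n) auto

lemma merges_rep:
  "merges (a # replicate m k) =
     concat (map (\<lambda>l. map ((#) (a + l*k)) (merges (replicate (m-l) k))) [0..<Suc m])"
proof (induction m arbitrary: a)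
  case 0
  then show ?case by simp
next
  case (Suc m)
  have "[0..<Suc (Suc m)] = 0 # map Suc [0..<Suc m]"
    by (simp add: map_Suc_upt upt_conv_Cons del: upt_Suc)
  then show ?case
    by (simp add: Suc.IH[of "a+k"] add.assoc comp_def del: upt_Suc)
qed

lemma sum_merges_Suc:
  "(\<Sum>q\<leftarrow>merges (replicate (Suc m) k). F q) =
   (\<Sum>l<Suc m. \<Sum>y\<leftarrow>merges (replicate (m-l) k). F (Suc l * k # y))"
proof -
  have "merges (replicate (Suc m) k) = merges (k # replicate m k)" by simp
  also have "\<dots> = concat (map (\<lambda>l. map ((#) (k + l*k)) (merges (replicate (m-l) k))) [0..<Suc m])"
    by (rule merges_rep)
  finally show ?thesis
    by (simp add: sum_list_map_concat sum_list_map_upt0 comp_def del: upt_Suc)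
qed

definition addhd :: "nat \<Rightarrow> nat list \<Rightarrow> nat list" where
  "addhd b l = (case l of [] \<Rightarrow> [] | x # l' \<Rightarrow> (x + b) # l')"

lemma merges_addhd: "merges ((a + b) # r) = map (addhd b) (merges (a # r))"
proof (induction r arbitrary: a)
  case Nil
  then show ?case by (simp add: addhd_def)
next
  case (Cons c r)
  have "merges ((a + c + b) # r) = map (addhd b) (merges ((a + c) # r))" by (rule Cons.IH)
  then show ?case by (simp add: addhd_def comp_def add.commute add.left_commute)
qed

lemma merges_props:
  "q \<in> set (merges l) \<Longrightarrow> sum_list q = sum_list l \<and> length q \<le> length l \<and>
     (l \<noteq> [] \<longrightarrow> q \<noteq> []) \<and> (\<forall>x\<in>set q. \<exists>y\<in>set l. y \<le> x)"
proof (induction l arbitrary: q rule: merges.induct)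
  case 1
  then show ?case by simp
next
  case (2 a)
  then show ?case by simp
next
  case (3 a b r)
  from "3.prems" consider (A) q' where "q = a # q'" "q' \<in> set (merges (b # r))"
    | (B) "q \<in> set (merges ((a + b) # r))" by auto
  then show ?case
  proof cases
    case A
    then show ?thesis using "3.IH"(1)[of q'] by auto
  next
    case B
    with "3.IH"(2)[of q] show ?thesis by (auto simp: add.assoc)
  qed
qed

lemma stuffle_Nil2[simp]: "stuffle xs [] = [xs]"
  by (cases xs) auto

lemma stuffle_props:
  "m \<in> set (stuffle a b) \<Longrightarrow> sum_list m = sum_list a + sum_list b \<and> length m \<le> length a + length b
    \<and> (m = [] \<longrightarrow> a = [] \<and> b = [])"
proof (induction a b arbitrary: m rule: stuffle.induct)
  case (1 l)
  then show ?case by simp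
next
  case (2 v va)
  then show ?case by simp
next
  case (3 a k b l)
  from "3.prems" consider (A) m' where "m = a # m'" "m' \<in> set (stuffle k (b # l))"
    | (B) m' where "m = b # m'" "m' \<in> set (stuffle (a # k) l)"
    | (C) m' where "m = (a+b) # m'" "m' \<in> set (stuffle k l)" by auto
  then show ?case
  proof cases
    case A
    then show ?thesis using "3.IH"(1)[of m'] by auto
  next
    case B
    then show ?thesis using "3.IH"(2)[of m'] by auto
  next
    case C
    then show ?thesis using "3.IH"(3)[of m'] by auto
  qed
qed



definition pmk :: "nat \<Rightarrow> nat list \<Rightarrow> bool" where
  "pmk k p = (\<forall>x\<in>set p. 0 < x \<and> k dvd x)"

definition Sc :: "nat \<Rightarrow> nat \<Rightarrow> nat \<Rightarrow> nat list \<Rightarrow> nat" where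
  "Sc k i j p = (\<Sum>q\<leftarrow>merges (replicate j k). count_list (stuffle (replicate i k) q) p)"

lemma count_map_cons: "count_list (map ((#) a) L) (h # p) = (if a = h then count_list L p else 0)"
  by (induction L) auto

lemma count_map_cons_Nil: "count_list (map ((#) a) L) [] = 0"
  by (induction L) auto

lemma Sc_0_0: "Sc k 0 0 p = (if p = [] then 1 else 0)"
  by (auto simp: Sc_def)

lemma Sc_Nil: "Sc k i j [] = (if i = 0 \<and> j = 0 then 1 else 0)"
proof -
  have "count_list (stuffle (replicate i k) q) [] = 0" if "q \<in> set (merges (replicate j k))" "\<not> (i = 0 \<and> j = 0)" for q
  proof -
    have "[] \<notin> set (stuffle (replicate i k) q)"
      using merges_props[OF that(1)] stuffle_props[of "[]" "replicate i k" q] that(2) by auto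
    then show ?thesis by simp
  qed
  then show ?thesis by (auto simp: Sc_def)
qed

lemma Sc_cons:
  "Sc k i j (h # p) =
     (if 1 \<le> i \<and> h = k then Sc k (i-1) j p else 0)
   + (\<Sum>l<j. if h = Suc l * k then Sc k i (j - Suc l) p else 0)
   + (if 1 \<le> i then (\<Sum>l<j. if h = Suc (Suc l) * k then Sc k (i-1) (j - Suc l) p else 0) else 0)"
proof (cases j)
  case 0
  then show ?thesis
    by (cases i) (auto simp: Sc_def)
next
  case (Suc m)
  show ?thesis
  proof (cases i)
    case 0
    have "Sc k i j (h # p) = (\<Sum>l<Suc m. \<Sum>y\<leftarrow>merges (replicate (m-l) k). count_list [Suc l * k # y] (h # p))"
      unfolding Sc_def using Suc 0 by (simp only: sum_merges_Suc) simp
    also have "\<dots> = (\<Sum>l<Suc m. if h = Suc l * k then Sc k 0 (m - l) p else 0)"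
      by (rule sum.cong) (auto simp: Sc_def cong: if_cong)
    finally show ?thesis using Suc 0 by (simp del: sum.lessThan_Suc cong: if_cong)
  next
    case (Suc i')
    have "Sc k (Suc i') (Suc m) (h # p) = (\<Sum>l<Suc m. \<Sum>y\<leftarrow>merges (replicate (m-l) k).
         count_list (stuffle (k # replicate i' k) (Suc l * k # y)) (h # p))"
      unfolding Sc_def by (simp only: sum_merges_Suc) simp
    also have "\<dots> = (\<Sum>l<Suc m. \<Sum>y\<leftarrow>merges (replicate (m-l) k).
         (if k = h then count_list (stuffle (replicate i' k) (Suc l * k # y)) p else 0)
       + (if Suc l * k = h then count_list (stuffle (k # replicate i' k) y) p else 0)
       + (if k + Suc l * k = h then count_list (stuffle (replicate i' k) y) p else 0))"
      by (simp only: stuffle.simps replicate_Suc map_append count_list_append count_map_cons add.assoc)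
    also have "\<dots> = (\<Sum>l<Suc m. \<Sum>y\<leftarrow>merges (replicate (m-l) k).
         (if k = h then count_list (stuffle (replicate i' k) (Suc l * k # y)) p else 0))
       + (\<Sum>l<Suc m. if h = Suc l * k then Sc k (Suc i') (m - l) p else 0)
       + (\<Sum>l<Suc m. if h = Suc (Suc l) * k then Sc k i' (m - l) p else 0)"
      unfolding sum_list_addf sum.distrib Sc_def
      by (intro arg_cong2[where f="(+)"] refl sum.cong) auto
    also have "(\<Sum>l<Suc m. \<Sum>y\<leftarrow>merges (replicate (m-l) k).
         (if k = h then count_list (stuffle (replicate i' k) (Suc l * k # y)) p else 0))
       = (if h = k then Sc k i' (Suc m) p else 0)"
      unfolding Sc_def by (simp only: sum_merges_Suc) auto
    finally show ?thesis using Suc \<open>j = Suc m\<close> by (simp del: sum.lessThan_Suc cong: if_cong)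
  qed
qed

lemma pmk_len: "pmk k p \<Longrightarrow> length p \<le> sum_list (map (\<lambda>x. x div k) p)"
proof (induction p)
  case Nil
  then show ?case by simp
next
  case (Cons a p)
  then have "0 < a" "k dvd a" "pmk k p" by (auto simp: pmk_def)
  then have "1 \<le> a div k" by (auto elim!: dvdE)
  with Cons show ?case by (simp add: \<open>pmk k p\<close>)
qed

lemma sum_delta1: "(\<Sum>l<j. if c = Suc l then X l else 0) = (if 1 \<le> c \<and> c \<le> j then X (c - 1) else (0::'a::comm_monoid_add))"
  by (cases c) (auto simp: sum.delta)

lemma sum_delta2: "(\<Sum>l<j. if c = Suc (Suc l) then X l else 0) = (if 2 \<le> c \<and> c \<le> j + 1 then X (c - 2) else (0::'a::comm_monoid_add))"
proof (cases c)
  case 0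
  then show ?thesis by simp
next
  case (Suc c')
  then show ?thesis by (cases c') (auto simp: sum.delta)
qed

lemma arith_main:
  fixes c r \<sigma> i j :: nat
  assumes c1: "1 \<le> c" and rs: "P \<Longrightarrow> r \<le> \<sigma>"
  shows "(if 1 \<le> i \<and> c = 1 then (if P \<and> \<sigma> = i - 1 + j then r choose (i-1) else 0) else 0)
    + (if 1 \<le> c \<and> c \<le> j then (if P \<and> \<sigma> = i + (j - c) then r choose i else 0) else 0)
    + (if 1 \<le> i then if 2 \<le> c \<and> c \<le> j + 1 then (if P \<and> \<sigma> = i - 1 + (j - (c - 1)) then r choose (i-1) else 0) else 0 else 0)
    = (if P \<and> c + \<sigma> = i + j then Suc r choose i else 0)"
proof (cases P)
  case False
  then show ?thesis by simp
next
  case True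
  with rs have rs': "r \<le> \<sigma>" by simp
  show ?thesis
  proof (cases i)
    case 0
    then show ?thesis using c1 True by auto
  next
    case (Suc i')
    consider "c = 1" | "2 \<le> c \<and> c \<le> j" | "c = j + 1" | "c > j + 1" using c1 by linarith
    then show ?thesis
    proof cases
      case 1
      then show ?thesis using Suc True rs' by (auto simp: binomial_eq_0)
    next
      case 2
      then show ?thesis using Suc True rs' by (auto simp: binomial_eq_0)
    next
      case 3
      then show ?thesis using Suc True rs' c1 by (auto simp: binomial_eq_0)
    next
      case 4
      then show ?thesis using Suc True rs' by (auto simp: binomial_eq_0)
    qed
  qed
qed

lemma count_main:
  assumes k: "0 < k"
  shows "Sc k i j p = (if pmk k p \<and> sum_list (map (\<lambda>x. x div k) p) = i + j then length p choose i else 0)"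
proof (induction p arbitrary: i j)
  case Nil
  then show ?case by (auto simp: Sc_Nil pmk_def)
next
  case (Cons h p)
  show ?case
  proof (cases "0 < h \<and> k dvd h")
    case False
    then have "h \<noteq> k" "\<And>l. h \<noteq> Suc l * k" "\<And>l. h \<noteq> Suc (Suc l) * k" using k by auto
    then show ?thesis using False by (auto simp add: Sc_cons pmk_def)
  next
    case True
    then obtain c where hc: "h = c * k" by (auto elim!: dvdE simp: mult.commute)
    with True have c1: "1 \<le> c" by (cases c) auto
    have e1: "(h = k) = (c = 1)" using hc k by simp
    have e2: "(h = Suc l * k) = (c = Suc l)" for l using hc k by (simp only: mult_cancel2) simp
    have e3: "(h = Suc (Suc l) * k) = (c = Suc (Suc l))" for l using hc k by (simp only: mult_cancel2) simp
    have hd: "h div k = c" using hc k by simp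
    have "Sc k i j (h # p) = (if 1 \<le> i \<and> c = 1 then Sc k (i-1) j p else 0)
       + (if 1 \<le> c \<and> c \<le> j then Sc k i (j - Suc (c - 1)) p else 0)
       + (if 1 \<le> i then (if 2 \<le> c \<and> c \<le> j + 1 then Sc k (i-1) (j - Suc (c - 2)) p else 0) else 0)"
      unfolding Sc_cons e1 e2 e3 sum_delta1 sum_delta2 by simp
    also have "\<dots> = (if 1 \<le> i \<and> c = 1 then Sc k (i-1) j p else 0)
       + (if 1 \<le> c \<and> c \<le> j then Sc k i (j - c) p else 0)
       + (if 1 \<le> i then (if 2 \<le> c \<and> c \<le> j + 1 then Sc k (i-1) (j - (c - 1)) p else 0) else 0)"
      using c1 by (auto simp: Suc_diff_Suc)
    also have "\<dots> = (if pmk k p \<and> c + sum_list (map (\<lambda>x. x div k) p) = i + j then Suc (length p) choose i else 0)"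
      unfolding Cons.IH by (rule arith_main[OF c1 pmk_len])
    finally show ?thesis using True hd by (auto simp: pmk_def)
  qed
qed


lemma binom_weight:
  fixes t :: "'a::comm_ring_1"
  assumes "r \<le> n"
  shows "(\<Sum>i\<le>n. (1-t)^i * t^(n-i) * of_nat (r choose i)) = t^(n-r)"
proof -
  have "(\<Sum>i\<le>n. (1-t)^i * t^(n-i) * of_nat (r choose i)) = (\<Sum>i\<le>r. (1-t)^i * t^(n-i) * of_nat (r choose i))"
    using assms by (intro sum.mono_neutral_right) (auto simp: binomial_eq_0)
  also have "\<dots> = (\<Sum>i\<le>r. t^(n-r) * (of_nat (r choose i) * (1-t)^i * t^(r-i)))"
  proof (rule sum.cong)
    fix i assume "i \<in> {..r}"
    then have "n - i = (n - r) + (r - i)" using assms by auto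
    then show "(1-t)^i * t^(n-i) * of_nat (r choose i) = t^(n-r) * (of_nat (r choose i) * (1-t)^i * t^(r-i))"
      by (simp add: power_add mult_ac)
  qed simp
  also have "\<dots> = t^(n-r) * ((1-t) + t)^r"
    unfolding binomial_ring by (simp add: sum_distrib_left)
  finally show ?thesis by simp
qed

lemma sum_list_as_count:
  fixes g :: "'b \<Rightarrow> 'a::comm_ring_1"
  assumes "finite P" "set L \<subseteq> P"
  shows "(\<Sum>m\<leftarrow>L. g m) = (\<Sum>p\<in>P. of_nat (count_list L p) * g p)"
  using assms(2)
proof (induction L)
  case Nil
  then show ?case by simp
next
  case (Cons q L)
  then have qP: "q \<in> P" and IH: "(\<Sum>m\<leftarrow>L. g m) = (\<Sum>p\<in>P. of_nat (count_list L p) * g p)" by auto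
  have "(\<Sum>p\<in>P. of_nat (count_list (q # L) p) * g p) =
        (\<Sum>p\<in>P. of_nat (count_list L p) * g p) + (\<Sum>p\<in>P. if q = p then g p else 0)"
    by (auto simp add: sum.distrib[symmetric] distrib_right intro!: sum.cong)
  also have "(\<Sum>p\<in>P. if q = p then g p else 0) = g q"
    using qP assms(1) by (simp add: sum.delta)
  finally show ?case using IH by simp
qed

lemma sum_stuffle_count:
  fixes g :: "nat list \<Rightarrow> 'a::comm_ring_1"
  assumes "finite P" "\<forall>q\<in>set L. set (stuffle a q) \<subseteq> P"
  shows "(\<Sum>q\<leftarrow>L. \<Sum>m\<leftarrow>stuffle a q. g m) = (\<Sum>p\<in>P. of_nat (\<Sum>q\<leftarrow>L. count_list (stuffle a q) p) * g p)"
  using assms(2)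
proof (induction L)
  case Nil
  then show ?case by simp
next
  case (Cons q L)
  then show ?case
    by (simp add: sum_list_as_count[OF assms(1)] sum.distrib[symmetric] distrib_right)
qed

lemma Sc0: "Sc k 0 n p = count_list (merges (replicate n k)) p"
proof -
  have "count_list L p = (\<Sum>q\<leftarrow>L. count_list (stuffle [] q) p)" for L :: "nat list list"
    by (induction L) auto
  then show ?thesis by (simp add: Sc_def)
qed

lemma core:
  fixes t :: "'a::comm_ring_1" and g :: "nat list \<Rightarrow> 'a"
  assumes k: "0 < k"
  shows "(\<Sum>q\<leftarrow>merges (replicate n k). t^(n - length q) * g q) =
    (\<Sum>i\<le>n. (1-t)^i * t^(n-i) * (\<Sum>q\<leftarrow>merges (replicate (n-i) k). \<Sum>m\<leftarrow>stuffle (replicate i k) q. g m))"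
proof -
  define P where "P = {p. set p \<subseteq> {..n*k} \<and> length p \<le> n}"
  have finP: "finite P" unfolding P_def by (rule finite_lists_length_le) simp
  have inP: "p \<in> P" if "sum_list p = n * k" "length p \<le> n" for p
    using that member_le_sum_list[of _ p] unfolding P_def by fastforce
  have mP: "set (merges (replicate n k)) \<subseteq> P"
    using merges_props[of _ "replicate n k"] inP by (auto simp: sum_list_replicate)
  have sP: "\<forall>q\<in>set (merges (replicate (n-i) k)). set (stuffle (replicate i k) q) \<subseteq> P" if "i \<le> n" for i
  proof (intro ballI subsetI)
    fix q m assume q: "q \<in> set (merges (replicate (n-i) k))" and m: "m \<in> set (stuffle (replicate i k) q)"
    from merges_props[OF q] stuffle_props[OF m] that show "m \<in> P"
      by (intro inP) (auto simp: sum_list_replicate add_mult_distrib[symmetric])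
  qed
  define C where "C p = (pmk k p \<and> sum_list (map (\<lambda>x. x div k) p) = n)" for p
  have "(\<Sum>q\<leftarrow>merges (replicate n k). t^(n - length q) * g q) =
      (\<Sum>p\<in>P. of_nat (count_list (merges (replicate n k)) p) * (t^(n - length p) * g p))"
    by (rule sum_list_as_count[OF finP mP])
  also have "\<dots> = (\<Sum>p\<in>P. (if C p then t^(n - length p) else 0) * g p)"
    by (intro sum.cong refl) (simp add: Sc0[symmetric] count_main[OF k] C_def)
  also have "\<dots> = (\<Sum>p\<in>P. (\<Sum>i\<le>n. (1-t)^i * t^(n-i) * of_nat (Sc k i (n-i) p)) * g p)"
  proof (intro sum.cong refl arg_cong2[where f="(*)"])
    fix p assume "p \<in> P"
    show "(if C p then t^(n - length p) else 0) = (\<Sum>i\<le>n. (1-t)^i * t^(n-i) * of_nat (Sc k i (n-i) p))"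
    proof (cases "C p")
      case True
      then have "length p \<le> n" using pmk_len[of k p] by (auto simp: C_def)
      have "(\<Sum>i\<le>n. (1-t)^i * t^(n-i) * of_nat (Sc k i (n-i) p)) =
            (\<Sum>i\<le>n. (1-t)^i * t^(n-i) * of_nat (length p choose i))"
        using True by (intro sum.cong refl) (auto simp: count_main[OF k] C_def)
      then show ?thesis using True binom_weight[OF \<open>length p \<le> n\<close>, of t] by simp
    next
      case False
      then show ?thesis by (auto simp: count_main[OF k] C_def intro!: sum.neutral)
    qed
  qed
  also have "\<dots> = (\<Sum>i\<le>n. (1-t)^i * t^(n-i) * (\<Sum>p\<in>P. of_nat (Sc k i (n-i) p) * g p))"
    by (simp add: sum_distrib_left sum_distrib_right sum.swap[of _ P] mult_ac)
  also have "\<dots> = (\<Sum>i\<le>n. (1-t)^i * t^(n-i) * (\<Sum>q\<leftarrow>merges (replicate (n-i) k). \<Sum>m\<leftarrow>stuffle (replicate i k) q. g m))"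
    by (intro sum.cong refl arg_cong2[where f="(*)"]) (simp add: sum_stuffle_count[OF finP sP] Sc_def)
  finally show ?thesis .
qed



definition ev :: "(rat poly \<times> letter list) list \<Rightarrow> elem" where
  "ev R = (\<lambda>v. \<Sum>(c,w)\<leftarrow>R. c * (if w = v then 1 else 0))"

definition E :: "(rat poly \<times> letter list) list \<Rightarrow> (letter list \<Rightarrow> rat poly) \<Rightarrow> rat poly" where
  "E R G = (\<Sum>(c,w)\<leftarrow>R. c * G w)"

lemma ev_E: "ev R v = E R (\<lambda>w. if w = v then 1 else 0)"
  by (simp add: ev_def E_def)

lemma E_append: "E (R1 @ R2) G = E R1 G + E R2 G"
  by (simp add: E_def)

lemma E_map1: "E (map (\<lambda>(c,u). (c, f u)) R) G = E R (\<lambda>u. G (f u))"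
  by (induction R) (auto simp: E_def)

lemma E_map2: "E (map (\<lambda>(c,u). (a * c, f u)) R) G = a * E R (\<lambda>u. G (f u))"
  by (induction R) (auto simp: E_def algebra_simps)

lemma E_Cons: "E ((c, w) # R) G = c * G w + E R G"
  by (simp add: E_def)

lemma E_Nil: "E [] G = 0"
  by (simp add: E_def)

lemma E_single: "E [(c, w)] G = c * G w"
  by (simp add: E_def)

lemma E_cong: "(\<And>w. G w = H w) \<Longrightarrow> E R G = E R H"
  by (simp add: E_def)

lemma sum_supp:
  assumes "finite A" "supp f \<subseteq> A"
  shows "(\<Sum>a\<in>supp f. f a * F a) = (\<Sum>a\<in>A. f a * F a)"
  using assms by (intro sum.mono_neutral_left) (auto simp: supp_def)

lemma ev_notin: "w \<notin> snd ` set R \<Longrightarrow> ev R w = 0"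
  by (induction R) (auto simp: ev_def)

lemma supp_ev: "supp (ev R) \<subseteq> snd ` set R"
  using ev_notin unfolding supp_def by blast

lemma sum_ev:
  assumes "finite A" "snd ` set R \<subseteq> A"
  shows "(\<Sum>a\<in>A. ev R a * F a) = E R F"
  using assms(2)
proof (induction R)
  case Nil
  then show ?case by (simp add: ev_def E_def)
next
  case (Cons x R)
  obtain c w where x: "x = (c, w)" by force
  with Cons have wA: "w \<in> A" and IH: "(\<Sum>a\<in>A. ev R a * F a) = E R F" by auto
  have "(\<Sum>a\<in>A. ev (x # R) a * F a) = (\<Sum>a\<in>A. (if w = a then c * F a else 0)) + (\<Sum>a\<in>A. ev R a * F a)"
    unfolding x by (auto simp: ev_def sum.distrib[symmetric] distrib_right intro!: sum.cong)
  also have "(\<Sum>a\<in>A. (if w = a then c * F a else 0)) = c * F w"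
    using wA assms(1) by (simp add: sum.delta)
  finally show ?case using IH x by (simp add: E_def)
qed

lemma sum_supp_ev: "(\<Sum>a\<in>supp (ev R). ev R a * F a) = E R F"
  by (subst sum_supp[of "snd ` set R"]) (auto simp: supp_ev intro: sum_ev)

lemma wd_ev: "wd w = ev [(1, w)]"
  by (auto simp: wd_def ev_def)

lemma lin_ev: "lin L (ev R) v = E R (\<lambda>w. L w v)"
  unfolding lin_def by (rule sum_supp_ev)

lemma cmul_ev: "cmul (ev R1) (ev R2) v = E R1 (\<lambda>a. E R2 (\<lambda>b. if a @ b = v then 1 else 0))"
proof -
  have "cmul (ev R1) (ev R2) v = (\<Sum>a\<in>supp (ev R1). ev R1 a * (\<Sum>b\<in>supp (ev R2). ev R2 b * (if a @ b = v then 1 else 0)))"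
    unfolding cmul_def by (auto simp: sum_distrib_left intro!: sum.cong)
  then show ?thesis by (simp add: sum_supp_ev)
qed

lemma harm_ev: "harm (ev R1) (ev R2) v = E R1 (\<lambda>a. E R2 (\<lambda>b. harm_w a b v))"
proof -
  have "harm (ev R1) (ev R2) v = (\<Sum>a\<in>supp (ev R1). ev R1 a * (\<Sum>b\<in>supp (ev R2). ev R2 b * harm_w a b v))"
    unfolding harm_def by (auto simp: sum_distrib_left mult_ac intro!: sum.cong)
  then show ?thesis by (simp add: sum_supp_ev)
qed

fun sr :: "rat poly \<Rightarrow> letter list \<Rightarrow> (rat poly \<times> letter list) list" where
  "sr s [] = [(1, [])]"
| "sr s (LX # w) = map (\<lambda>(c,u). (c, LX # u)) (sr s w)"
| "sr s (LY # w) = map (\<lambda>(c,u). (s * c, LX # u)) (sr s w) @ map (\<lambda>(c,u). (c, LY # u)) (sr s w)"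

lemma sigma_ev: "sigma s w = ev (sr s w)"
proof (induction s w rule: sigma.induct)
  case (1 s)
  then show ?case by (simp add: wd_ev)
next
  case (2 s w)
  show ?case
  proof
    fix v
    show "sigma s (LX # w) v = ev (sr s (LX # w)) v"
      by (simp only: sigma.simps 2 wd_ev cmul_ev) (simp add: E_single ev_E E_map1)
  qed
next
  case (3 s w)
  have e: "(\<lambda>v. s * wd [LX] v + wd [LY] v) = ev [(s, [LX]), (1, [LY])]"
    by (auto simp: wd_def ev_def)
  show ?case
  proof
    fix v
    show "sigma s (LY # w) v = ev (sr s (LY # w)) v"
      by (simp only: sigma.simps 3 e cmul_ev) (simp add: E_Cons E_Nil ev_E E_append E_map1 E_map2)
  qed
qed

lemma E_sr_Nil: "E (sr s []) G = G []"
  by (simp add: E_single)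

lemma E_sr_LX: "E (sr s (LX # u)) G = E (sr s u) (\<lambda>w. G (LX # w))"
  by (simp add: E_map1)

lemma E_sr_LY: "E (sr s (LY # u)) G = s * E (sr s u) (\<lambda>w. G (LX # w)) + E (sr s u) (\<lambda>w. G (LY # w))"
  by (simp add: E_append E_map1 E_map2)

lemma E_sr_rep: "E (sr s (replicate m LX @ u)) G = E (sr s u) (\<lambda>w. G (replicate m LX @ w))"
proof (induction m arbitrary: G)
  case 0
  then show ?case by simp
next
  case (Suc m)
  show ?case by (simp only: replicate_Suc append_Cons E_sr_LX Suc.IH)
qed

lemma zpow_0[simp]: "zpow k 0 = []"
  by (simp add: zpow_def)

lemma zpow_Suc: "zpow k (Suc n) = zk k @ zpow k n"
  by (simp add: zpow_def)

lemma zpow_snoc: "zpow k (Suc n) = zpow k n @ zk k"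
  by (induction n) (simp_all add: zpow_Suc)

lemma zw_Cons: "zw (a # q) = zk a @ zw q"
  by (simp add: zw_def)

lemma zw_Nil[simp]: "zw [] = []"
  by (simp add: zw_def)

lemma rep_LX_Cons: "0 < k \<Longrightarrow> replicate (k-1) x @ x # w = replicate k x @ w"
  by (cases k) (simp_all add: replicate_app_Cons_same)

lemma zw_addhd:
  assumes "0 < a" shows "zw (addhd k (a # q)) = replicate k LX @ zw (a # q)"
proof -
  have "replicate (a + k - 1) LX = replicate k LX @ replicate (a - 1) LX"
    using assms by (simp add: replicate_add[symmetric])
  then show ?thesis by (simp add: addhd_def zw_Cons zk_def)
qed

lemma merges_rep_props:
  assumes "q \<in> set (merges (replicate j k))"
  shows "length q \<le> j \<and> (j \<noteq> 0 \<longrightarrow> q \<noteq> []) \<and> (\<forall>x\<in>set q. k \<le> x)"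
  using merges_props[OF assms] by auto

lemma sum_list_cong': "(\<And>x. x \<in> set L \<Longrightarrow> f x = g x) \<Longrightarrow> sum_list (map f L) = sum_list (map g L)"
  by (metis map_cong)

lemma claim_sr:
  assumes k: "0 < k"
  shows "E (sr s (zpow k n @ replicate (k-1) LX)) (\<lambda>a. G (a @ [LY])) =
         (\<Sum>q\<leftarrow>merges (replicate (Suc n) k). s^(Suc n - length q) * G (zw q))"
proof (induction n arbitrary: G)
  case 0
  then show ?case using E_sr_rep[of s "k-1" "[]"] by (simp add: E_single zw_def zk_def)
next
  case (Suc n)
  define W where "W = zpow k n @ replicate (k-1) LX"
  have eq: "zpow k (Suc n) @ replicate (k-1) LX = replicate (k-1) LX @ LY # W"
    by (simp add: W_def zpow_Suc zk_def)
  have "E (sr s (zpow k (Suc n) @ replicate (k-1) LX)) (\<lambda>a. G (a @ [LY])) =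
      s * E (sr s W) (\<lambda>w. G (replicate (k-1) LX @ LX # w @ [LY])) +
      E (sr s W) (\<lambda>w. G (replicate (k-1) LX @ LY # w @ [LY]))"
    by (simp only: eq E_sr_rep E_sr_LY append_assoc append_Cons)
  also have "\<dots> = s * E (sr s W) (\<lambda>w. (\<lambda>u. G (replicate k LX @ u)) (w @ [LY])) +
      E (sr s W) (\<lambda>w. (\<lambda>u. G (zk k @ u)) (w @ [LY]))"
  proof -
    have r: "\<And>w. replicate (k - 1) LX @ LX # w = replicate k LX @ w"
      using rep_LX_Cons[OF k, of LX] by simp
    show ?thesis by (simp only: r zk_def append_assoc append_Cons append_Nil)
  qed
  also have "\<dots> = s * (\<Sum>q\<leftarrow>merges (replicate (Suc n) k). s^(Suc n - length q) * G (replicate k LX @ zw q)) +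
      (\<Sum>q\<leftarrow>merges (replicate (Suc n) k). s^(Suc n - length q) * G (zk k @ zw q))"
    unfolding W_def by (simp only: Suc.IH[of "\<lambda>u. G (replicate k LX @ u)"] Suc.IH[of "\<lambda>u. G (zk k @ u)"])
  also have "\<dots> = (\<Sum>q\<leftarrow>merges (replicate (Suc (Suc n)) k). s^(Suc (Suc n) - length q) * G (zw q))"
  proof -
    have m: "merges (replicate (Suc (Suc n)) k) =
       map ((#) k) (merges (replicate (Suc n) k)) @ map (addhd k) (merges (replicate (Suc n) k))"
      using merges_addhd[of k k "replicate n k"] by simp
    have A: "(\<Sum>q\<leftarrow>map ((#) k) (merges (replicate (Suc n) k)). s^(Suc (Suc n) - length q) * G (zw q))
        = (\<Sum>q\<leftarrow>merges (replicate (Suc n) k). s^(Suc n - length q) * G (zk k @ zw q))"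
      by (simp add: comp_def zw_Cons)
    have B: "(\<Sum>q\<leftarrow>map (addhd k) (merges (replicate (Suc n) k)). s^(Suc (Suc n) - length q) * G (zw q))
        = s * (\<Sum>q\<leftarrow>merges (replicate (Suc n) k). s^(Suc n - length q) * G (replicate k LX @ zw q))"
    proof -
      have "(\<Sum>q\<leftarrow>map (addhd k) (merges (replicate (Suc n) k)). s^(Suc (Suc n) - length q) * G (zw q))
         = (\<Sum>q\<leftarrow>merges (replicate (Suc n) k). s * (s^(Suc n - length q) * G (replicate k LX @ zw q)))"
        unfolding map_map comp_def
      proof (rule sum_list_cong')
        fix q assume q: "q \<in> set (merges (replicate (Suc n) k))"
        have qp: "length q \<le> Suc n \<and> q \<noteq> [] \<and> (\<forall>x\<in>set q. k \<le> x)"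
          using merges_rep_props[OF q] by simp
        then obtain a q' where qa: "q = a # q'" by (cases q) auto
        with qp have a: "k \<le> a" and lq: "length q \<le> Suc n" by auto
        have "Suc (Suc n) - length (addhd k q) = Suc (Suc n - length q)"
          using lq by (simp add: qa addhd_def)
        then show "s^(Suc (Suc n) - length (addhd k q)) * G (zw (addhd k q)) =
              s * (s^(Suc n - length q) * G (replicate k LX @ zw q))"
          using zw_addhd[of a k q'] a k qa by simp
      qed
      then show ?thesis by (simp add: sum_list_const_mult)
    qed
    show ?thesis unfolding m sum_list_append map_append A B by simp
  qed
  finally show ?case .
qed

lemma Sw_zpow:
  assumes k: "0 < k"
  shows "Sw s (zpow k n) = ev (map (\<lambda>q. (s^(n - length q), zw q)) (merges (replicate n k)))"
proof (cases n)
  case 0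
  then show ?thesis by (simp add: Sw_def wd_ev)
next
  case (Suc n')
  have z: "zpow k n = (zpow k n' @ replicate (k-1) LX) @ [LY]"
    by (simp add: Suc zpow_snoc zk_def)
  show ?thesis
  proof
    fix v
    have b: "butlast (zpow k n) = zpow k n' @ replicate (k-1) LX" and l: "last (zpow k n) = LY"
      and ne: "zpow k n \<noteq> []" unfolding z by (simp only: butlast_snoc, simp only: last_snoc, simp)
    have "Sw s (zpow k n) v = E (sr s (zpow k n' @ replicate (k-1) LX)) (\<lambda>a. (\<lambda>u. if u = v then 1 else 0) (a @ [LY]))"
      unfolding Sw_def b l using ne by (simp add: sigma_ev wd_ev cmul_ev E_single)
    also have "\<dots> = (\<Sum>q\<leftarrow>merges (replicate n k). s^(n - length q) * (if zw q = v then 1 else 0))"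
      using claim_sr[OF k, of s n' "\<lambda>u. if u = v then 1 else 0"] Suc by simp
    also have "\<dots> = ev (map (\<lambda>q. (s^(n - length q), zw q)) (merges (replicate n k))) v"
      by (simp add: ev_E E_def comp_def)
    finally show "Sw s (zpow k n) v = ev (map (\<lambda>q. (s^(n - length q), zw q)) (merges (replicate n k))) v" .
  qed
qed

lemma toidx_aux_rep: "toidx_aux c (replicate m LX @ w) = toidx_aux (c + m) w"
  by (induction m arbitrary: c) auto

lemma toidx_zw: "(\<forall>x\<in>set q. 0 < x) \<Longrightarrow> toidx (zw q) = q"
proof (induction q)
  case Nil
  then show ?case by (simp add: toidx_def)
next
  case (Cons a q)
  then show ?case
    by (simp add: toidx_def zw_Cons zk_def toidx_aux_rep)
qed

lemma zpow_zw: "zpow k i = zw (replicate i k)"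
  by (simp add: zpow_def zw_def map_replicate)

theorem part1:
  assumes k: "1 \<le> k"
  shows "Smap tvar (wd (zpow k n)) =
           (\<lambda>v. \<Sum>i\<le>n. (1 - tvar) ^ i * tvar ^ (n - i) *
                  harm (wd (zpow k i)) (Smap 1 (wd (zpow k (n - i)))) v)"
proof
  fix v
  have k0: "0 < k" using k by simp
  have pos: "\<forall>x\<in>set q. 0 < x" if "q \<in> set (merges (replicate j k))" for q j
    using merges_rep_props[OF that] k by auto
  have "Smap tvar (wd (zpow k n)) v = Sw tvar (zpow k n) v"
    by (simp add: Smap_def wd_ev lin_ev E_single)
  also have "\<dots> = (\<Sum>q\<leftarrow>merges (replicate n k). tvar^(n - length q) * wd (zw q) v)"
    by (simp add: Sw_zpow[OF k0] ev_E E_def comp_def wd_def eq_commute)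
  also have "\<dots> = (\<Sum>i\<le>n. (1-tvar)^i * tvar^(n-i) *
       (\<Sum>q\<leftarrow>merges (replicate (n-i) k). \<Sum>m\<leftarrow>stuffle (replicate i k) q. wd (zw m) v))"
    by (rule core[OF k0])
  also have "\<dots> = (\<Sum>i\<le>n. (1 - tvar) ^ i * tvar ^ (n - i) *
                  harm (wd (zpow k i)) (Smap 1 (wd (zpow k (n - i)))) v)"
  proof (intro sum.cong refl arg_cong2[where f="(*)"])
    fix i
    have "Smap 1 (wd (zpow k (n - i))) = Sw 1 (zpow k (n - i))"
      by (auto simp: Smap_def wd_ev lin_ev E_single)
    then have "harm (wd (zpow k i)) (Smap 1 (wd (zpow k (n - i)))) v =
        (\<Sum>q\<leftarrow>merges (replicate (n-i) k). harm_w (zpow k i) (zw q) v)"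
      by (simp add: Sw_zpow[OF k0] wd_ev harm_ev E_single E_def comp_def)
    also have "\<dots> = (\<Sum>q\<leftarrow>merges (replicate (n-i) k). \<Sum>m\<leftarrow>stuffle (replicate i k) q. wd (zw m) v)"
    proof (rule sum_list_cong')
      fix q assume "q \<in> set (merges (replicate (n - i) k))"
      then have "toidx (zw q) = q" using pos toidx_zw by blast
      moreover have "toidx (zpow k i) = replicate i k" using k0 by (simp add: zpow_zw toidx_zw)
      ultimately show "harm_w (zpow k i) (zw q) v = (\<Sum>m\<leftarrow>stuffle (replicate i k) q. wd (zw m) v)"
        by (simp add: harm_w_def)
    qed
    finally show "(\<Sum>q\<leftarrow>merges (replicate (n-i) k). \<Sum>m\<leftarrow>stuffle (replicate i k) q. wd (zw m) v) =
        harm (wd (zpow k i)) (Smap 1 (wd (zpow k (n - i)))) v" by simp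
  qed
  finally show "Smap tvar (wd (zpow k n)) v = (\<Sum>i\<le>n. (1 - tvar) ^ i * tvar ^ (n - i) *
                  harm (wd (zpow k i)) (Smap 1 (wd (zpow k (n - i)))) v)" .
qed



fun Zt :: "nat list \<Rightarrow> nat \<Rightarrow> real" where
  "Zt [] M = 1"
| "Zt (a # x) M = (\<Sum>m\<in>{1..<M}. Zt x m / real m ^ a)"

fun Zs :: "nat list \<Rightarrow> nat \<Rightarrow> real" where
  "Zs [] M = 1"
| "Zs (a # x) M = (\<Sum>m\<in>{1..<M}. Zs x (Suc m) / real m ^ a)"

lemma Zt_Suc: "Zt (a # x) (Suc M) = Zt (a # x) M + (if M = 0 then 0 else 1 / real M ^ a) * Zt x M"
  by (cases M) (auto simp: atLeastLessThanSuc)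

lemma Zs_Suc: "Zs (a # x) (Suc M) = Zs (a # x) M + (if M = 0 then 0 else 1 / real M ^ a) * Zs x (Suc M)"
  by (cases M) (auto simp: atLeastLessThanSuc)

lemma Zt_0: "Zt (a # x) 0 = 0"
  by simp

lemma sum_list_map_cons_Zt:
  "(\<Sum>w\<leftarrow>map ((#) c) S. Zt w (Suc M)) =
   (\<Sum>w\<leftarrow>S. Zt (c # w) M) + (if M = 0 then 0 else 1 / real M ^ c) * (\<Sum>w\<leftarrow>S. Zt w M)"
  by (simp add: comp_def Zt_Suc sum_list_addf sum_list_const_mult del: Zt.simps)

lemma stuffle_Zt: "Zt u M * Zt v M = (\<Sum>w\<leftarrow>stuffle u v. Zt w M)"
proof (induction M arbitrary: u v)
  case 0
  show ?case
  proof (cases u)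
    case Nil
    then show ?thesis by simp
  next
    case (Cons a x)
    then show ?thesis by (cases v) (auto simp: comp_def)
  qed
next
  case (Suc M)
  show ?case
  proof (cases u)
    case Nil
    then show ?thesis by simp
  next
    case (Cons a x)
    note u = Cons
    show ?thesis
    proof (cases v)
      case Nil
      then show ?thesis by simp
    next
      case (Cons b y)
      define wt where "wt c = (if M = 0 then 0 else 1 / real M ^ c)" for c
      have wab: "wt (a + b) = wt a * wt b" by (simp add: wt_def power_add)
      have S: "(\<Sum>w\<leftarrow>stuffle u v. Zt w (Suc M)) =
         ((\<Sum>w\<leftarrow>stuffle x (b # y). Zt (a # w) M) + (\<Sum>w\<leftarrow>stuffle (a # x) y. Zt (b # w) M)
           + (\<Sum>w\<leftarrow>stuffle x y. Zt ((a+b) # w) M))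
         + wt a * (\<Sum>w\<leftarrow>stuffle x (b # y). Zt w M) + wt b * (\<Sum>w\<leftarrow>stuffle (a # x) y. Zt w M)
         + wt (a+b) * (\<Sum>w\<leftarrow>stuffle x y. Zt w M)"
        unfolding u Cons stuffle.simps sum_list_append map_append sum_list_map_cons_Zt wt_def
        by (simp only: algebra_simps)
      have S0: "(\<Sum>w\<leftarrow>stuffle x (b # y). Zt (a # w) M) + (\<Sum>w\<leftarrow>stuffle (a # x) y. Zt (b # w) M)
           + (\<Sum>w\<leftarrow>stuffle x y. Zt ((a+b) # w) M) = Zt u M * Zt v M"
      proof -
        have "(\<Sum>w\<leftarrow>stuffle x (b # y). Zt (a # w) M) + (\<Sum>w\<leftarrow>stuffle (a # x) y. Zt (b # w) M)
           + (\<Sum>w\<leftarrow>stuffle x y. Zt ((a+b) # w) M) = (\<Sum>w\<leftarrow>stuffle u v. Zt w M)"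
          unfolding u Cons stuffle.simps sum_list_append map_append
          by (simp add: comp_def del: Zt.simps)
        then show ?thesis using Suc.IH[of u v] by simp
      qed
      have "Zt u (Suc M) * Zt v (Suc M) = (Zt u M + wt a * Zt x M) * (Zt v M + wt b * Zt y M)"
        unfolding u Cons Zt_Suc wt_def ..
      also have "\<dots> = Zt u M * Zt v M + wt a * (Zt x M * Zt v M) + wt b * (Zt u M * Zt y M)
          + wt (a+b) * (Zt x M * Zt y M)"
        unfolding wab u Cons by (simp add: algebra_simps del: Zt.simps)
      also have "\<dots> = (\<Sum>w\<leftarrow>stuffle u v. Zt w (Suc M))"
        unfolding S S0 by (simp only: Suc.IH[symmetric]) (simp only: u Cons)
      finally show ?thesis unfolding u Cons .
    qed
  qed
qed

lemma sum_list_div: "(\<Sum>q\<leftarrow>L. f q) / (c::real) = (\<Sum>q\<leftarrow>L. f q / c)"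
  by (induction L) (auto simp: add_divide_distrib)

lemma sum_sum_list_swap: "(\<Sum>m\<in>A. \<Sum>q\<leftarrow>L. f m q) = (\<Sum>q\<leftarrow>L. \<Sum>m\<in>A. f m q)"
  by (induction L) (auto simp: sum.distrib)

lemma Zs_merges: "Zs l M = (\<Sum>q\<leftarrow>merges l. Zt q M)"
proof (induction l arbitrary: M rule: merges.induct)
  case 1
  then show ?case by simp
next
  case (2 a)
  then show ?case by simp
next
  case (3 a b r)
  have "Zs (a # b # r) M = (\<Sum>m\<in>{1..<M}. Zs (b # r) m / real m ^ a + Zs r (Suc m) / real m ^ (a + b))"
  proof -
    have "Zs (b # r) (Suc m) / real m ^ a = Zs (b # r) m / real m ^ a + Zs r (Suc m) / real m ^ (a + b)"
      if "m \<in> {1..<M}" for m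
      using that by (simp only: Zs_Suc) (auto simp: power_add field_simps)
    then show ?thesis by (simp only: Zs.simps(2)) (rule sum.cong, auto)
  qed
  also have "\<dots> = (\<Sum>m\<in>{1..<M}. Zs (b # r) m / real m ^ a) + Zs ((a + b) # r) M"
    by (simp add: sum.distrib)
  also have "(\<Sum>m\<in>{1..<M}. Zs (b # r) m / real m ^ a) = (\<Sum>q\<leftarrow>merges (b # r). Zt (a # q) M)"
    by (simp only: "3.IH"(1)) (simp add: sum_list_div sum_sum_list_swap comp_def del: Zs.simps)
  finally show ?case using "3.IH"(2) by (simp add: comp_def)
qed

definition fterm :: "nat list \<Rightarrow> nat list \<Rightarrow> real" where
  "fterm ks ms = (\<Prod>j<length ks. 1 / real (ms ! j) ^ (ks ! j))"

definition Dst :: "nat list \<Rightarrow> nat list set" where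
  "Dst ks = {ms. length ms = length ks \<and> sorted_wrt (>) ms \<and> (\<forall>m\<in>set ms. 0 < m)}"

definition Dws :: "nat list \<Rightarrow> nat list set" where
  "Dws ks = {ms. length ms = length ks \<and> sorted_wrt (\<ge>) ms \<and> (\<forall>m\<in>set ms. 0 < m)}"

lemma fterm_Cons: "fterm (a # x) (m # l) = 1 / real m ^ a * fterm x l"
  unfolding fterm_def by (simp only: length_Cons prod.lessThan_Suc_shift) simp

lemma fin_bounded: "finite {ms \<in> D. length ms = n \<and> (\<forall>m\<in>set ms. m < (M::nat))}"
proof (rule finite_subset)
  show "finite {xs. set xs \<subseteq> {..<M} \<and> length xs = n}" by (rule finite_lists_length_eq) simp
qed auto

lemma Dst_fin: "finite {ms \<in> Dst ks. \<forall>m\<in>set ms. m < M}"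
  using fin_bounded[of "Dst ks" "length ks" M] by (rule finite_subset[rotated]) (auto simp: Dst_def)

lemma Dws_fin: "finite {ms \<in> Dws ks. \<forall>m\<in>set ms. m < M}"
  using fin_bounded[of "Dws ks" "length ks" M] by (rule finite_subset[rotated]) (auto simp: Dws_def)

lemma Zt_set: "Zt ks M = sum (fterm ks) {ms \<in> Dst ks. \<forall>m\<in>set ms. m < M}"
proof (induction ks arbitrary: M)
  case Nil
  have "{ms \<in> Dst []. \<forall>m\<in>set ms. m < M} = {[]}" by (auto simp: Dst_def)
  then show ?case by (simp add: fterm_def)
next
  case (Cons a x)
  have eq: "{ms \<in> Dst (a # x). \<forall>m\<in>set ms. m < M} =
      (\<lambda>(m, l). m # l) ` (SIGMA m:{1..<M}. {l \<in> Dst x. \<forall>y\<in>set l. y < m})"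
  proof (intro equalityI subsetI)
    fix ms assume "ms \<in> {ms \<in> Dst (a # x). \<forall>m\<in>set ms. m < M}"
    then obtain m l where "ms = m # l" and "length l = length x" "sorted_wrt (>) (m # l)"
      "\<forall>y\<in>set (m # l). 0 < y" "\<forall>y\<in>set (m # l). y < M"
      by (cases ms) (auto simp: Dst_def)
    then show "ms \<in> (\<lambda>(m, l). m # l) ` (SIGMA m:{1..<M}. {l \<in> Dst x. \<forall>y\<in>set l. y < m})"
      by (auto simp: Dst_def intro!: image_eqI[where x="(m, l)"])
  next
    fix ms assume "ms \<in> (\<lambda>(m, l). m # l) ` (SIGMA m:{1..<M}. {l \<in> Dst x. \<forall>y\<in>set l. y < m})"
    then show "ms \<in> {ms \<in> Dst (a # x). \<forall>m\<in>set ms. m < M}"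
      by (force simp: Dst_def intro: less_trans)
  qed
  have inj: "inj_on (\<lambda>(m, l). m # l) (SIGMA m:{1..<M}. {l \<in> Dst x. \<forall>y\<in>set l. y < m})"
    by (auto simp: inj_on_def)
  have "sum (fterm (a # x)) {ms \<in> Dst (a # x). \<forall>m\<in>set ms. m < M} =
     (\<Sum>m\<in>{1..<M}. \<Sum>l\<in>{l \<in> Dst x. \<forall>y\<in>set l. y < m}. fterm (a # x) (m # l))"
    unfolding eq sum.reindex[OF inj] by (subst sum.Sigma) (auto simp: Dst_fin comp_def intro!: sum.cong)
  also have "\<dots> = (\<Sum>m\<in>{1..<M}. Zt x m / real m ^ a)"
    by (simp add: fterm_Cons Cons.IH sum_divide_distrib)
  finally show ?case by simp
qed

lemma Zs_set: "Zs ks M = sum (fterm ks) {ms \<in> Dws ks. \<forall>m\<in>set ms. m < M}"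
proof (induction ks arbitrary: M)
  case Nil
  have "{ms \<in> Dws []. \<forall>m\<in>set ms. m < M} = {[]}" by (auto simp: Dws_def)
  then show ?case by (simp add: fterm_def)
next
  case (Cons a x)
  have eq: "{ms \<in> Dws (a # x). \<forall>m\<in>set ms. m < M} =
      (\<lambda>(m, l). m # l) ` (SIGMA m:{1..<M}. {l \<in> Dws x. \<forall>y\<in>set l. y < Suc m})"
  proof (intro equalityI subsetI)
    fix ms assume "ms \<in> {ms \<in> Dws (a # x). \<forall>m\<in>set ms. m < M}"
    then obtain m l where "ms = m # l" and "length l = length x" "sorted_wrt (\<ge>) (m # l)"
      "\<forall>y\<in>set (m # l). 0 < y" "\<forall>y\<in>set (m # l). y < M"
      by (cases ms) (auto simp: Dws_def)
    then show "ms \<in> (\<lambda>(m, l). m # l) ` (SIGMA m:{1..<M}. {l \<in> Dws x. \<forall>y\<in>set l. y < Suc m})"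
      by (auto simp: Dws_def less_Suc_eq_le intro!: image_eqI[where x="(m, l)"])
  next
    fix ms assume "ms \<in> (\<lambda>(m, l). m # l) ` (SIGMA m:{1..<M}. {l \<in> Dws x. \<forall>y\<in>set l. y < Suc m})"
    then show "ms \<in> {ms \<in> Dws (a # x). \<forall>m\<in>set ms. m < M}"
      by (force simp: Dws_def less_Suc_eq_le intro: le_less_trans)
  qed
  have inj: "inj_on (\<lambda>(m, l). m # l) (SIGMA m:{1..<M}. {l \<in> Dws x. \<forall>y\<in>set l. y < Suc m})"
    by (auto simp: inj_on_def)
  have "sum (fterm (a # x)) {ms \<in> Dws (a # x). \<forall>m\<in>set ms. m < M} =
     (\<Sum>m\<in>{1..<M}. \<Sum>l\<in>{l \<in> Dws x. \<forall>y\<in>set l. y < Suc m}. fterm (a # x) (m # l))"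
    unfolding eq sum.reindex[OF inj] by (subst sum.Sigma) (auto simp: Dws_fin comp_def intro!: sum.cong)
  also have "\<dots> = (\<Sum>m\<in>{1..<M}. Zs x (Suc m) / real m ^ a)"
    by (simp add: fterm_Cons Cons.IH sum_divide_distrib)
  finally show ?case by simp
qed



lemma inv_sq_le: "1 \<le> N \<Longrightarrow> (\<Sum>m\<in>{1..N}. 1 / real m ^ 2) \<le> 2 - 1 / real N"
proof (induction N)
  case 0
  then show ?case by simp
next
  case (Suc N)
  show ?case
  proof (cases "N = 0")
    case True
    then show ?thesis by simp
  next
    case False
    then have IH: "(\<Sum>m\<in>{1..N}. 1 / real m ^ 2) \<le> 2 - 1 / real N" using Suc by simp
    have e: "1 / real N - 1 / real (Suc N) = 1 / (real N * real (Suc N))"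
      using False by (simp add: field_simps)
    have "1 / real (Suc N) ^ 2 \<le> 1 / (real N * real (Suc N))"
      using False by (intro divide_left_mono) (auto simp: power2_eq_square)
    then have key: "1 / real (Suc N) ^ 2 \<le> 1 / real N - 1 / real (Suc N)" using e by simp
    have "(\<Sum>m\<in>{1..Suc N}. 1 / real m ^ 2) = (\<Sum>m\<in>{1..N}. 1 / real m ^ 2) + 1 / real (Suc N) ^ 2"
      by simp
    also have "\<dots> \<le> 2 - 1 / real (Suc N)" using IH key by linarith
    finally show ?thesis .
  qed
qed

lemma sum_inv_pow_le2:
  assumes a: "2 \<le> a"
  shows "(\<Sum>m\<in>{1..<M}. 1 / real m ^ a) \<le> 2"
proof -
  have "(\<Sum>m\<in>{1..<M}. 1 / real m ^ a) \<le> (\<Sum>m\<in>{1..<M}. 1 / real m ^ 2)"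
  proof (rule sum_mono)
    fix m assume "m \<in> {1..<M}"
    then have m1: "1 \<le> real m" by simp
    have "real m ^ 2 \<le> real m ^ a" using power_increasing[OF a m1] .
    then show "1 / real m ^ a \<le> 1 / real m ^ 2"
      using m1 by (intro divide_left_mono) auto
  qed
  also have "\<dots> \<le> 2"
  proof (cases M)
    case 0
    then show ?thesis by simp
  next
    case (Suc M')
    have "(\<Sum>m\<in>{1..<M}. 1 / real m ^ 2) \<le> (\<Sum>m\<in>{1..M}. 1 / real m ^ 2)"
      by (intro sum_mono2) auto
    also have "\<dots> \<le> 2 - 1 / real M" using inv_sq_le[of M] Suc by simp
    also have "\<dots> \<le> 2" by simp
    finally show ?thesis .
  qed
  finally show ?thesis .
qed

lemma Zt_nonneg: "0 \<le> Zt ks M"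
  by (induction ks arbitrary: M) (auto intro!: sum_nonneg)

lemma Zs_nonneg: "0 \<le> Zs ks M"
  by (induction ks arbitrary: M) (auto intro!: sum_nonneg)

lemma Zt_bound: "\<forall>x\<in>set ks. 2 \<le> x \<Longrightarrow> Zt ks M \<le> 2 ^ length ks"
proof (induction ks arbitrary: M)
  case Nil
  then show ?case by simp
next
  case (Cons a x)
  have "Zt (a # x) M = (\<Sum>m\<in>{1..<M}. Zt x m * (1 / real m ^ a))" by simp
  also have "\<dots> \<le> (\<Sum>m\<in>{1..<M}. 2 ^ length x * (1 / real m ^ a))"
    using Cons by (intro sum_mono mult_right_mono) auto
  also have "\<dots> = 2 ^ length x * (\<Sum>m\<in>{1..<M}. 1 / real m ^ a)" by (simp add: sum_distrib_left)
  also have "\<dots> \<le> 2 ^ length x * 2" using Cons.prems sum_inv_pow_le2[of a M] by (intro mult_left_mono) auto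
  finally show ?case by simp
qed

lemma Zs_bound: "\<forall>x\<in>set ks. 2 \<le> x \<Longrightarrow> Zs ks M \<le> 2 ^ length ks"
proof (induction ks arbitrary: M)
  case Nil
  then show ?case by simp
next
  case (Cons a x)
  have "Zs (a # x) M = (\<Sum>m\<in>{1..<M}. Zs x (Suc m) * (1 / real m ^ a))" by simp
  also have "\<dots> \<le> (\<Sum>m\<in>{1..<M}. 2 ^ length x * (1 / real m ^ a))"
    using Cons by (intro sum_mono mult_right_mono) auto
  also have "\<dots> = 2 ^ length x * (\<Sum>m\<in>{1..<M}. 1 / real m ^ a)" by (simp add: sum_distrib_left)
  also have "\<dots> \<le> 2 ^ length x * 2" using Cons.prems sum_inv_pow_le2[of a M] by (intro mult_left_mono) auto
  finally show ?case by simp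
qed

lemma conv_infsum:
  fixes f :: "'a \<Rightarrow> real" and F :: "nat \<Rightarrow> 'a set"
  assumes nn: "\<And>x. x \<in> D \<Longrightarrow> 0 \<le> f x" and sub: "\<And>M. F M \<subseteq> D" and fin: "\<And>M. finite (F M)"
    and mono: "\<And>M M'. M \<le> M' \<Longrightarrow> F M \<subseteq> F M'" and cov: "\<And>x. x \<in> D \<Longrightarrow> \<exists>M. x \<in> F M"
    and bnd: "\<And>M. sum f (F M) \<le> B"
  shows "(\<lambda>M. sum f (F M)) \<longlonglongrightarrow> infsum f D"
proof -
  have fincov: "\<exists>M. X \<subseteq> F M" if "finite X" "X \<subseteq> D" for X
    using that
  proof (induction X rule: finite_induct)
    case empty
    then show ?case by simp
  next
    case (insert x X)
    then obtain M1 where "X \<subseteq> F M1" by auto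
    moreover have "x \<in> D" using insert.prems by simp
    then obtain M2 where "x \<in> F M2" using cov by blast
    ultimately have "insert x X \<subseteq> F (max M1 M2)" using mono[of M1 "max M1 M2"] mono[of M2 "max M1 M2"] by auto
    then show ?case by blast
  qed
  have summ: "f summable_on D"
  proof (rule nonneg_bdd_above_summable_on)
    show "0 \<le> f x" if "x \<in> D" for x using nn that .
    show "bdd_above (sum f ` {G. G \<subseteq> D \<and> finite G})"
    proof (rule bdd_aboveI)
      fix y assume "y \<in> sum f ` {G. G \<subseteq> D \<and> finite G}"
      then obtain G where G: "G \<subseteq> D" "finite G" "y = sum f G" by auto
      then obtain M where "G \<subseteq> F M" using fincov by blast
      then have "sum f G \<le> sum f (F M)" using fin sub nn by (intro sum_mono2) blast+
      then show "y \<le> B" using bnd[of M] G by simp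
    qed
  qed
  then have "(sum f \<longlongrightarrow> infsum f D) (finite_subsets_at_top D)"
    using has_sum_infsum has_sum_def by blast
  moreover have "filterlim F (finite_subsets_at_top D) sequentially"
    unfolding filterlim_finite_subsets_at_top
  proof (intro allI impI)
    fix X assume "finite X \<and> X \<subseteq> D"
    then obtain M0 where "X \<subseteq> F M0" using fincov by blast
    then show "\<forall>\<^sub>F y in sequentially. finite (F y) \<and> X \<subseteq> F y \<and> F y \<subseteq> D"
      using fin sub mono unfolding eventually_sequentially by blast
  qed
  ultimately show ?thesis by (rule filterlim_compose)
qed

lemma fterm_nonneg: "0 \<le> fterm ks ms"
  by (simp add: fterm_def prod_nonneg)

lemma cov_lemma: "\<exists>M. \<forall>m\<in>set ms. m < (M::nat)"
  by (rule exI[of _ "Suc (sum_list ms)"]) (auto simp: le_imp_less_Suc member_le_sum_list)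

lemma Zt_lim:
  assumes "\<forall>x\<in>set ks. 2 \<le> x"
  shows "(\<lambda>M. Zt ks M) \<longlonglongrightarrow> mzv ks"
proof -
  have m: "mzv ks = infsum (fterm ks) (Dst ks)"
    by (simp add: mzv_def fterm_def[abs_def] Dst_def)
  show ?thesis
    unfolding m Zt_set
    by (rule conv_infsum[where B="2 ^ length ks"])
       (use Zt_bound[OF assms] cov_lemma in \<open>auto simp: fterm_nonneg Dst_fin Zt_set\<close>)
qed

lemma Zs_lim:
  assumes "\<forall>x\<in>set ks. 2 \<le> x"
  shows "(\<lambda>M. Zs ks M) \<longlonglongrightarrow> mzsv ks"
proof -
  have m: "mzsv ks = infsum (fterm ks) (Dws ks)"
    by (simp add: mzsv_def fterm_def[abs_def] Dws_def)
  show ?thesis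
    unfolding m Zs_set
    by (rule conv_infsum[where B="2 ^ length ks"])
       (use Zs_bound[OF assms] cov_lemma in \<open>auto simp: fterm_nonneg Dws_fin Zs_set\<close>)
qed



lemma sum_list_smult: "(\<Sum>x\<leftarrow>L. smult (f x) p) = smult (\<Sum>x\<leftarrow>L. f x) p"
  by (induction L) (auto simp: smult_add_left)

lemma coeff_sum_list: "coeff (\<Sum>x\<leftarrow>L. f x) d = (\<Sum>x\<leftarrow>L. coeff (f x) d)"
  by (induction L) auto

lemma tendsto_sum_list:
  fixes f :: "'a \<Rightarrow> nat \<Rightarrow> real"
  shows "(\<And>x. x \<in> set L \<Longrightarrow> (\<lambda>M. f x M) \<longlonglongrightarrow> l x) \<Longrightarrow> (\<lambda>M. \<Sum>x\<leftarrow>L. f x M) \<longlonglongrightarrow> (\<Sum>x\<leftarrow>L. l x)"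
  by (induction L) (auto intro!: tendsto_add)

lemma one_minus_X: "1 - [:0, 1:] = ([:1, -1:] :: real poly)"
  by (rule poly_eqI) (auto simp: coeff_pCons split: nat.split)

lemma part2_trunc:
  assumes k: "0 < k"
  shows "(\<Sum>q\<leftarrow>merges (replicate n k). monom (Zt q M) (n - length q)) =
    (\<Sum>i\<le>n. smult (Zt (replicate i k) M * Zs (replicate (n-i) k) M) ([:1,-1:] ^ i * [:0,1:] ^ (n-i)))"
proof -
  have "(\<Sum>q\<leftarrow>merges (replicate n k). monom (Zt q M) (n - length q)) =
     (\<Sum>q\<leftarrow>merges (replicate n k). [:0,1:] ^ (n - length q) * smult (Zt q M) 1)"
    by (simp add: monom_altdef)
  also have "\<dots> = (\<Sum>i\<le>n. (1 - [:0,1:]) ^ i * [:0,1:] ^ (n-i) *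
      (\<Sum>q\<leftarrow>merges (replicate (n-i) k). \<Sum>m\<leftarrow>stuffle (replicate i k) q. smult (Zt m M) 1))"
    by (rule core[OF k])
  also have "\<dots> = (\<Sum>i\<le>n. smult (Zt (replicate i k) M * Zs (replicate (n-i) k) M) ([:1,-1:] ^ i * [:0,1:] ^ (n-i)))"
  proof (intro sum.cong refl)
    fix i
    have "(\<Sum>q\<leftarrow>merges (replicate (n-i) k). \<Sum>m\<leftarrow>stuffle (replicate i k) q. smult (Zt m M) 1)
        = smult (\<Sum>q\<leftarrow>merges (replicate (n-i) k). \<Sum>m\<leftarrow>stuffle (replicate i k) q. Zt m M) 1"
      by (simp only: sum_list_smult)
    also have "(\<Sum>q\<leftarrow>merges (replicate (n-i) k). \<Sum>m\<leftarrow>stuffle (replicate i k) q. Zt m M)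
        = Zt (replicate i k) M * Zs (replicate (n-i) k) M"
      by (simp add: stuffle_Zt[symmetric] sum_list_const_mult Zs_merges del: Zt.simps Zs.simps)
    finally show "(1 - [:0,1:]) ^ i * [:0,1:] ^ (n-i) *
      (\<Sum>q\<leftarrow>merges (replicate (n-i) k). \<Sum>m\<leftarrow>stuffle (replicate i k) q. smult (Zt m M) 1) =
      smult (Zt (replicate i k) M * Zs (replicate (n-i) k) M) ([:1,-1:] ^ i * [:0,1:] ^ (n-i))"
      by (simp only: one_minus_X mult_smult_right mult_1_right)
  qed
  finally show ?thesis .
qed

theorem part2:
  assumes k: "2 \<le> k"
  shows "mzv_t (replicate n k) =
           (\<Sum>i\<le>n. smult (mzv (replicate i k) * mzsv (replicate (n - i) k))
                        ([:1, -1:] ^ i * [:0, 1:] ^ (n - i)))"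
proof (rule poly_eqI)
  fix d
  have k0: "0 < k" using k by simp
  define A where "A M = (\<Sum>q\<leftarrow>merges (replicate n k). if n - length q = d then Zt q M else 0)" for M
  define B where "B M = (\<Sum>i\<le>n. Zt (replicate i k) M * Zs (replicate (n-i) k) M * coeff ([:1,-1:] ^ i * [:0,1:] ^ (n-i)) d)" for M
  have AB: "A M = B M" for M
  proof -
    have "coeff (\<Sum>q\<leftarrow>merges (replicate n k). monom (Zt q M) (n - length q)) d = A M"
      by (simp add: A_def coeff_sum_list coeff_monom comp_def del: Zt.simps)
    moreover have "coeff (\<Sum>i\<le>n. smult (Zt (replicate i k) M * Zs (replicate (n-i) k) M) ([:1,-1:] ^ i * [:0,1:] ^ (n-i))) d = B M"
      by (simp add: B_def coeff_sum del: Zt.simps Zs.simps)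
    ultimately show ?thesis using part2_trunc[OF k0, where n=n and M=M] by simp
  qed
  have AB': "A = B" using AB by (rule ext)
  have limA: "A \<longlonglongrightarrow> (\<Sum>q\<leftarrow>merges (replicate n k). if n - length q = d then mzv q else 0)"
    unfolding A_def
  proof (rule tendsto_sum_list)
    fix q assume q: "q \<in> set (merges (replicate n k))"
    then have "\<forall>x\<in>set q. 2 \<le> x" using merges_rep_props[OF q] k by auto
    then show "(\<lambda>M. if n - length q = d then Zt q M else 0) \<longlonglongrightarrow> (if n - length q = d then mzv q else 0)"
      using Zt_lim by auto
  qed
  have limB: "B \<longlonglongrightarrow> (\<Sum>i\<le>n. mzv (replicate i k) * mzsv (replicate (n-i) k) * coeff ([:1,-1:] ^ i * [:0,1:] ^ (n-i)) d)"
    unfolding B_def using k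
    by (intro tendsto_sum tendsto_mult tendsto_const Zt_lim Zs_lim) auto
  from limA have "B \<longlonglongrightarrow> (\<Sum>q\<leftarrow>merges (replicate n k). if n - length q = d then mzv q else 0)"
    unfolding AB' .
  from LIMSEQ_unique[OF this limB]
  have "(\<Sum>q\<leftarrow>merges (replicate n k). if n - length q = d then mzv q else 0) =
      (\<Sum>i\<le>n. mzv (replicate i k) * mzsv (replicate (n-i) k) * coeff ([:1,-1:] ^ i * [:0,1:] ^ (n-i)) d)" .
  then show "coeff (mzv_t (replicate n k)) d =
    coeff (\<Sum>i\<le>n. smult (mzv (replicate i k) * mzsv (replicate (n - i) k)) ([:1, -1:] ^ i * [:0, 1:] ^ (n - i))) d"
  proof -
    have "coeff (mzv_t (replicate n k)) d = (\<Sum>q\<leftarrow>merges (replicate n k). if n - length q = d then mzv q else 0)"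
      by (simp only: mzv_t_def coeff_sum_list coeff_monom length_replicate)
    moreover have "coeff (\<Sum>i\<le>n. smult (mzv (replicate i k) * mzsv (replicate (n - i) k)) ([:1, -1:] ^ i * [:0, 1:] ^ (n - i))) d
       = (\<Sum>i\<le>n. mzv (replicate i k) * mzsv (replicate (n-i) k) * coeff ([:1,-1:] ^ i * [:0,1:] ^ (n-i)) d)"
      by (simp only: coeff_sum coeff_smult)
    ultimately show ?thesis using \<open>(\<Sum>q\<leftarrow>merges (replicate n k). if n - length q = d then mzv q else 0) = _\<close> by simp
  qed
qed

theorem proposition4p5:
  fixes k n :: nat
  assumes "1 \<le> k" and "1 \<le> n"
  shows "Smap tvar (wd (zpow k n)) =
           (\<lambda>v. \<Sum>i\<le>n. (1 - tvar) ^ i * tvar ^ (n - i) *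
                  harm (wd (zpow k i)) (Smap 1 (wd (zpow k (n - i)))) v)
         \<and> (2 \<le> k \<longrightarrow>
           mzv_t (replicate n k) =
           (\<Sum>i\<le>n. smult (mzv (replicate i k) * mzsv (replicate (n - i) k))
                        ([:1, -1:] ^ i * [:0, 1:] ^ (n - i))))"
  using part1[OF assms(1)] part2 by blast


end
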